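(* Let $x=(x_n)_{n\in\mathbb{Z}}$ be an integer-valued sequence. For every $i\in\mathbb{Z}$, the set of descendants of $R_x(i)$ in the record graph of $x$ contains $\{j\in\mathbb{Z}: i\le j\le R_x(i)\}$.
   Context: The record map is $R_x(i)=\inf\{n>i: \sum_{l=i}^{n-1}x_l\ge0\}$ if this set is nonempty, and $R_x(i)=i$ otherwise; the record graph has vertex set $\mathbb{Z}$ and directed edges $i\to R_x(i)$ for $R_x(i)\neq i$. The set of descendants of $v$ is $D(v)=\{v\}\cup\{j\ne v: R_x^n(j)=v\text{ for some }n\ge1\}$. *)

theory Defs
  imports Main
begin

definition record_map :: "(int \<Rightarrow> int) \<Rightarrow> int \<Rightarrow> int" where
  "record_map x i =
     (if {n. n > i \<and> (\<Sum>l\<in>{i..<n}. x l) \<ge> 0} \<noteq> {}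
      then (LEAST n. n > i \<and> (\<Sum>l\<in>{i..<n}. x l) \<ge> 0)
      else i)"

text \<open>Descendants of v in the record graph (edges i -> R_x(i) for R_x(i) \<noteq> i).\<close>
definition descendants :: "(int \<Rightarrow> int) \<Rightarrow> int \<Rightarrow> int set" where
  "descendants x v = {v} \<union> {j. j \<noteq> v \<and> (\<exists>n::nat. n \<ge> 1 \<and> (record_map x ^^ n) j = v)}"

end

theory Submission
  imports Defs
begin

lemma int_least:
  fixes P :: "int \<Rightarrow> bool"
  assumes "P n" "\<And>m. P m \<Longrightarrow> j < m"
  shows "P (Least P) \<and> (\<forall>m. P m \<longrightarrow> Least P \<le> m)"
proof -
  define k where "k = (LEAST k::nat. P (j + int k))"
  have "j < n" using assms by blast
  then have "j + int (nat (n - j)) = n" by simp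
  then have Pn: "P (j + int (nat (n - j)))" using assms(1) by simp
  have Pk: "P (j + int k)" unfolding k_def by (rule LeastI, rule Pn)
  have mn: "\<forall>m. P m \<longrightarrow> j + int k \<le> m"
  proof (intro allI impI)
    fix m assume "P m"
    then have "j < m" using assms by blast
    then have "j + int (nat (m - j)) = m" by simp
    then have "P (j + int (nat (m - j)))" using \<open>P m\<close> by simp
    then have "k \<le> nat (m - j)" unfolding k_def by (simp add: Least_le)
    then show "j + int k \<le> m" using \<open>j < m\<close> by simp
  qed
  have "Least P = j + int k" by (rule Least_equality) (use Pk mn in auto)
  then show ?thesis using Pk mn by simp
qed

lemma rm_bound:
  assumes "n > j" "(\<Sum>l\<in>{j..<n}. x l) \<ge> 0"
  shows "j < record_map x j \<and> record_map x j \<le> n"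
proof -
  have ne: "{n. n > j \<and> (\<Sum>l\<in>{j..<n}. x l) \<ge> 0} \<noteq> {}" using assms by blast
  have "record_map x j = (LEAST n. n > j \<and> (\<Sum>l\<in>{j..<n}. x l) \<ge> 0)"
    using ne unfolding record_map_def by simp
  moreover have "(LEAST n. n > j \<and> (\<Sum>l\<in>{j..<n}. x l) \<ge> 0) \<le> n
    \<and> (LEAST n. n > j \<and> (\<Sum>l\<in>{j..<n}. x l) \<ge> 0) > j"
    using int_least[of "\<lambda>n. n > j \<and> (\<Sum>l\<in>{j..<n}. x l) \<ge> 0" n j] assms by auto
  ultimately show ?thesis by simp
qed

lemma sum_split:
  fixes i j r :: int
  assumes "i \<le> j" "j \<le> r"
  shows "(\<Sum>l\<in>{i..<r}. x l) = (\<Sum>l\<in>{i..<j}. x l) + (\<Sum>l\<in>{j..<r}. x l)"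
proof -
  have "{i..<r} = {i..<j} \<union> {j..<r}" using assms by auto
  then show ?thesis by (simp add: sum.union_disjoint ivl_disj_int)
qed

lemma reach:
  fixes x :: "int \<Rightarrow> int" and i :: int
  assumes step: "\<And>j. i \<le> j \<Longrightarrow> j < r \<Longrightarrow> j < record_map x j \<and> record_map x j \<le> r"
  shows "\<And>j. i \<le> j \<Longrightarrow> j \<le> r \<Longrightarrow> \<exists>n. (record_map x ^^ n) j = r"
proof -
  have "\<forall>j. nat (r - j) = k \<longrightarrow> i \<le> j \<longrightarrow> j \<le> r \<longrightarrow> (\<exists>n. (record_map x ^^ n) j = r)" for k
  proof (induction k rule: less_induct)
    case (less k)
    show ?case
    proof (intro allI impI)
      fix j assume k: "nat (r - j) = k" and ij: "i \<le> j" and jr: "j \<le> r"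
      show "\<exists>n. (record_map x ^^ n) j = r"
      proof (cases "j = r")
        case True then show ?thesis by (metis funpow_0)
      next
        case False
        with jr have "j < r" by simp
        from step[OF ij this] have s: "j < record_map x j" "record_map x j \<le> r" by auto
        then have "nat (r - record_map x j) < k" using k \<open>j < r\<close> by simp
        moreover have "i \<le> record_map x j" using s ij by simp
        ultimately obtain n where "(record_map x ^^ n) (record_map x j) = r"
          using less.IH s by blast
        then have "(record_map x ^^ Suc n) j = r" by (simp only: funpow_Suc_right comp_apply)
        then show ?thesis by blast
      qed
    qed
  qed
  then show "\<And>j. i \<le> j \<Longrightarrow> j \<le> r \<Longrightarrow> \<exists>n. (record_map x ^^ n) j = r" by blast
qed

theorem lemma2p17:
  fixes x :: "int \<Rightarrow> int" and i :: int
  shows "{j. i \<le> j \<and> j \<le> record_map x i} \<subseteq> descendants x (record_map x i)"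
proof (cases "{n. n > i \<and> (\<Sum>l\<in>{i..<n}. x l) \<ge> 0} = {}")
  case True
  then have "record_map x i = i" unfolding record_map_def by simp
  then show ?thesis unfolding descendants_def by auto
next
  case False
  define r where "r = record_map x i"
  have rdef: "r = (LEAST n. n > i \<and> (\<Sum>l\<in>{i..<n}. x l) \<ge> 0)"
    using False unfolding r_def record_map_def by simp
  obtain n0 where n0: "n0 > i \<and> (\<Sum>l\<in>{i..<n0}. x l) \<ge> 0" using False by blast
  have rP: "r > i \<and> (\<Sum>l\<in>{i..<r}. x l) \<ge> 0"
    and rmin0: "\<forall>m. (m > i \<and> (\<Sum>l\<in>{i..<m}. x l) \<ge> 0) \<longrightarrow> r \<le> m"
    unfolding rdef using int_least[of "\<lambda>n. n > i \<and> (\<Sum>l\<in>{i..<n}. x l) \<ge> 0" n0 i] n0 by auto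
  have rmin: "\<And>m. i < m \<Longrightarrow> m < r \<Longrightarrow> (\<Sum>l\<in>{i..<m}. x l) < 0"
    using rmin0 by force
  have step: "\<And>j. i \<le> j \<Longrightarrow> j < r \<Longrightarrow> j < record_map x j \<and> record_map x j \<le> r"
  proof -
    fix j assume ij: "i \<le> j" and jr: "j < r"
    show "j < record_map x j \<and> record_map x j \<le> r"
    proof (cases "j = i")
      case True then show ?thesis using rP r_def by simp
    next
      case False
      then have "(\<Sum>l\<in>{i..<j}. x l) < 0" using rmin ij jr by simp
      moreover have "(\<Sum>l\<in>{i..<r}. x l) = (\<Sum>l\<in>{i..<j}. x l) + (\<Sum>l\<in>{j..<r}. x l)"
        using sum_split[of i j r x] ij jr by simp
      ultimately have "(\<Sum>l\<in>{j..<r}. x l) \<ge> 0" using rP by linarith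
      then show ?thesis using rm_bound jr by blast
    qed
  qed
  show ?thesis
  proof
    fix j assume "j \<in> {j. i \<le> j \<and> j \<le> record_map x i}"
    then have ij: "i \<le> j" "j \<le> r" using r_def by auto
    obtain n where n: "(record_map x ^^ n) j = r" using reach[OF step ij] by blast
    show "j \<in> descendants x (record_map x i)"
    proof (cases "j = r")
      case True then show ?thesis unfolding descendants_def r_def by auto
    next
      case False
      then have "n \<ge> 1" using n by (cases n) auto
      then show ?thesis using n False unfolding descendants_def r_def by auto
    qed
  qed
qed

end
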